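(* Let $\alpha\in\mathbb{N}$, let $m$ be a positive odd integer with $m>4\alpha+2$, and let $\mathbb{S}=\langle 4,4\alpha+2,m\rangle$. Put $\beta_1=8\alpha+4$ and $\beta_3=2m$. Then (i) $F(\mathbb{S})=\frac{\beta_1+\beta_3}{2}-4$; (ii) $g(\mathbb{S})=\frac{\beta_1+\beta_3}{4}-\frac{3}{2}$.
   Context: $\mathbb{N}=\{0,1,2,\dots\}$. $\langle a_1,\dots,a_e\rangle$ is the set of $\mathbb{N}$-linear combinations of $a_1,\dots,a_e$. For a numerical semigroup $\mathbb{S}$, the Frobenius number $F(\mathbb{S})$ is the largest integer not in $\mathbb{S}$, and the genus $g(\mathbb{S})$ is the number of positive integers not in $\mathbb{S}$. *)

theory Defs
  imports Complex_Main
begin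

definition gen_semigroup :: "nat list \<Rightarrow> nat set" where
  "gen_semigroup as = {s. \<exists>c :: nat \<Rightarrow> nat. s = (\<Sum>i<length as. c i * as ! i)}"

definition frobenius :: "nat set \<Rightarrow> int" where
  "frobenius S = (GREATEST z :: int. z \<notin> int ` S)"

definition genus :: "nat set \<Rightarrow> nat" where
  "genus S = card {n :: nat. 0 < n \<and> n \<notin> S}"

end

theory Submission
  imports Defs
begin

lemma gs3: "gen_semigroup [p, q, r] = {x*p + y*q + z*r | x y z. True}"
proof -
  have s: "(\<Sum>i<length [p,q,r]. c i * [p,q,r] ! i) = c 0 * p + c 1 * q + c 2 * r" for c :: "nat \<Rightarrow> nat"
    by (simp add: numeral_3_eq_3 lessThan_Suc numeral_2_eq_2)
  show ?thesis
  proof (rule set_eqI, rule iffI)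
    fix n assume "n \<in> gen_semigroup [p, q, r]"
    then obtain c where "n = (\<Sum>i<length [p,q,r]. c i * [p,q,r] ! i)" unfolding gen_semigroup_def by auto
    then have "n = c 0 * p + c 1 * q + c 2 * r" using s by simp
    then show "n \<in> {x*p + y*q + z*r | x y z. True}" by blast
  next
    fix n assume "n \<in> {x*p + y*q + z*r | x y z. True}"
    then obtain x y z where n: "n = x*p + y*q + z*r" by blast
    define c where "c = (\<lambda>i::nat. if i = 0 then x else if i = 1 then y else z)"
    have "n = c 0 * p + c 1 * q + c 2 * r" unfolding c_def n by simp
    then have "n = (\<Sum>i<length [p,q,r]. c i * [p,q,r] ! i)" by (simp only: s)
    then show "n \<in> gen_semigroup [p, q, r]" unfolding gen_semigroup_def by blast
  qed
qed

definition PP :: "nat \<Rightarrow> nat \<Rightarrow> nat \<Rightarrow> bool" where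
  "PP a m n \<longleftrightarrow> n mod 4 = 0 \<or> (n mod 4 = 2 \<and> n \<ge> 4*a+2) \<or> (n mod 4 = m mod 4 \<and> n \<ge> m)
     \<or> (n mod 4 = (m+2) mod 4 \<and> n \<ge> m + 4*a+2)"

lemma split4: fixes n :: nat obtains q where "n = 4*q" | q where "n = 4*q+1" | q where "n = 4*q+2" | q where "n = 4*q+3"
proof -
  have "n mod 4 = 0 \<or> n mod 4 = 1 \<or> n mod 4 = 2 \<or> n mod 4 = 3" by linarith
  then show ?thesis using that div_mult_mod_eq[of n 4] by (metis add.right_neutral mult.commute)
qed
lemma PP1: "PP a (4*a+5+4*d) n \<longleftrightarrow> n mod 4 = 0 \<or> (n mod 4 = 2 \<and> n \<ge> 4*a+2) \<or> (n mod 4 = 1 \<and> n \<ge> 4*a+5+4*d)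
     \<or> (n mod 4 = 3 \<and> n \<ge> 8*a+7+4*d)"
proof -
  have "(4*a+5+4*d) mod 4 = 1" "(4*a+5+4*d+2) mod 4 = 3" by presburger+
  then show ?thesis unfolding PP_def by (simp add: algebra_simps)
qed
lemma PP3: "PP a (4*a+3+4*d) n \<longleftrightarrow> n mod 4 = 0 \<or> (n mod 4 = 2 \<and> n \<ge> 4*a+2) \<or> (n mod 4 = 3 \<and> n \<ge> 4*a+3+4*d)
     \<or> (n mod 4 = 1 \<and> n \<ge> 8*a+5+4*d)"
proof -
  have "(4*a+3+4*d) mod 4 = 3" "(4*a+3+4*d+2) mod 4 = 1" by presburger+
  then show ?thesis unfolding PP_def by (simp add: algebra_simps)
qed
lemma m4[simp]: "Suc (Suc (4*q)) mod 4 = 2" "Suc (4*q) mod 4 = 1" "(4*q+3) mod 4 = 3" "Suc (Suc (Suc (4*q))) mod 4 = 3" "(4*q) mod 4 = (0::nat)"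
  by presburger+
lemma above1: "n > 8*a+4*d+3 \<Longrightarrow> PP a (4*a+5+4*d) n"
  unfolding PP1 by (cases n rule: split4; auto; presburger)
lemma above3: "n > 8*a+4*d+1 \<Longrightarrow> PP a (4*a+3+4*d) n"
  unfolding PP3 by (cases n rule: split4; auto; presburger)
lemma notF1: "\<not> PP a (4*a+5+4*d) (8*a+4*d+3)"
  unfolding PP1 by presburger
lemma notF3: "\<not> PP a (4*a+3+4*d) (8*a+4*d+1)"
  unfolding PP3 by presburger
lemma sym1: "n + n' = 8*a+4*d+3 \<Longrightarrow> PP a (4*a+5+4*d) n \<longleftrightarrow> \<not> PP a (4*a+5+4*d) n'"
  unfolding PP1 by (cases n rule: split4; cases n' rule: split4; auto; presburger)
lemma sym3: "n + n' = 8*a+4*d+1 \<Longrightarrow> PP a (4*a+3+4*d) n \<longleftrightarrow> \<not> PP a (4*a+3+4*d) n'"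
  unfolding PP3 by (cases n rule: split4; cases n' rule: split4; auto; presburger)

lemma fwd:
  fixes a m n T c :: nat
  assumes m: "odd m" "m > 4*a+2" and n: "n = 4*T + c" "n \<ge> c"
    and c: "c \<in> {0, 4*a+2, m, 4*a+2+m, 2*m, 4*a+2+2*m, 3*m, 4*a+2+3*m}"
  shows "PP a m n"
proof -
  obtain j where j: "m = 2*j+1" using m(1) oddE by blast
  have r: "n mod 4 = c mod 4" using n by simp
  have r1: "(4*a+2) mod 4 = 2" by presburger
  have r2: "(4*a+2+m) mod 4 = (m+2) mod 4" by presburger
  have r3: "(2*m) mod 4 = 2" using j by presburger
  have r4: "(4*a+2+2*m) mod 4 = 0" using j by presburger
  have r5: "(3*m) mod 4 = (m+2) mod 4" using j by presburger
  have r6: "(4*a+2+3*m) mod 4 = m mod 4" using j by presburger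
  show ?thesis using c unfolding PP_def r
    apply (elim insertE)
    using r1 r2 r3 r4 r5 r6 n m(2) by auto
qed

lemma res4:
  fixes n c :: nat
  assumes "n mod 4 = c mod 4" "n \<ge> c"
  shows "\<exists>t. n = 4*t + c"
proof -
  obtain k where k: "n = c + k" using assms(2) le_Suc_ex by blast
  have "(c + k) mod 4 = c mod 4" using assms(1) k by simp
  then have "k mod 4 = 0" by presburger
  then have "k = 4 * (k div 4)" using div_mult_mod_eq[of k 4] by linarith
  then show ?thesis using k by (metis add.commute)
qed

lemma charS:
  fixes a m :: nat
  assumes "odd m" "m > 4*a+2"
  shows "n \<in> gen_semigroup [4, 4*a+2, m] \<longleftrightarrow> PP a m n"
proof
  assume "n \<in> gen_semigroup [4, 4*a+2, m]"
  then obtain x y z where n: "n = x*4 + y*(4*a+2) + z*m" unfolding gs3 by blast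
  define y' e where "y' = y div 2" and "e = y mod 2"
  have ye: "y = 2*y' + e" "e \<le> 1" unfolding y'_def e_def by auto
  define w r where "w = z div 4" and "r = z mod 4"
  have zr: "z = 4*w + r" "r < 4" unfolding w_def r_def by auto
  define T where "T = x + (2*a+1)*y' + m*w"
  have n1: "n = 4*T + ((4*a+2)*e + r*m)" unfolding T_def n ye zr by (simp add: algebra_simps)
  have e: "e = 0 \<or> e = 1" using ye by auto
  have r: "r = 0 \<or> r = 1 \<or> r = 2 \<or> r = 3" using zr by auto
  have c: "(4*a+2)*e + r*m \<in> {0, 4*a+2, m, 4*a+2+m, 2*m, 4*a+2+2*m, 3*m, 4*a+2+3*m}"
    using e r by (elim disjE) (simp_all add: algebra_simps)
  have ge: "n \<ge> (4*a+2)*e + r*m" using n1 by simp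
  show "PP a m n" using fwd[OF assms n1 ge c] .
next
  assume "PP a m n"
  have b2: "(4*a+2) mod 4 = 2" by presburger
  have mb: "(m + (4*a+2)) mod 4 = (m+2) mod 4" by presburger
  have disj: "n mod 4 = 0 \<or> (n mod 4 = (4*a+2) mod 4 \<and> n \<ge> 4*a+2) \<or> (n mod 4 = m mod 4 \<and> n \<ge> m)
     \<or> (n mod 4 = (m + (4*a+2)) mod 4 \<and> n \<ge> m + (4*a+2))"
    using \<open>PP a m n\<close> unfolding PP_def b2 mb by auto
  show "n \<in> gen_semigroup [4, 4*a+2, m]"
    using disj
  proof (elim disjE conjE)
    assume "n mod 4 = 0"
    then have "n = (n div 4)*4 + 0*(4*a+2) + 0*m" using div_mult_mod_eq[of n 4] by simp
    then show ?thesis unfolding gs3 by blast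
  next
    assume h: "n mod 4 = (4*a+2) mod 4" "n \<ge> 4*a+2"
    obtain t where "n = 4*t + (4*a+2)" using res4[OF h] by blast
    then have "n = t*4 + 1*(4*a+2) + 0*m" by simp
    then show ?thesis unfolding gs3 by blast
  next
    assume h: "n mod 4 = m mod 4" "n \<ge> m"
    obtain t where "n = 4*t + m" using res4[OF h] by blast
    then have "n = t*4 + 0*(4*a+2) + 1*m" by simp
    then show ?thesis unfolding gs3 by blast
  next
    assume h: "n mod 4 = (m + (4*a+2)) mod 4" "n \<ge> m + (4*a+2)"
    obtain t where "n = 4*t + (m + (4*a+2))" using res4[OF h] by blast
    then have "n = t*4 + 1*(4*a+2) + 1*m" by simp
    then show ?thesis unfolding gs3 by blast
  qed
qed

lemma abstract:
  fixes S :: "nat set" and F :: nat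
  assumes above: "\<And>n. n > F \<Longrightarrow> n \<in> S" and notF: "F \<notin> S"
    and sym: "\<And>n n'. n + n' = F \<Longrightarrow> n \<in> S \<longleftrightarrow> n' \<notin> S"
  shows "frobenius S = int F" "2 * genus S = F + 1"
proof -
  show "frobenius S = int F"
    unfolding frobenius_def
  proof (rule Greatest_equality)
    show "int F \<notin> int ` S" using notF by auto
  next
    fix y assume y: "y \<notin> int ` S"
    show "y \<le> int F"
    proof (cases "y < 0")
      case False
      then obtain n where "y = int n" by (metis nonneg_int_cases not_less)
      then have "n \<notin> S" using y by auto
      then have "n \<le> F" using above by (meson not_less)
      then show ?thesis using \<open>y = int n\<close> by simp
    qed simp
  qed
  define G where "G = {n :: nat. 0 < n \<and> n \<notin> S}"
  have GF: "G \<subseteq> {1..F}" unfolding G_def using above by (auto simp: not_less[symmetric])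
  have fin: "finite G" using GF finite_subset by blast
  have img: "(\<lambda>n. F - n) ` G = {n. n \<le> F \<and> n \<in> S}"
  proof (rule set_eqI, rule iffI)
    fix k assume "k \<in> (\<lambda>n. F - n) ` G"
    then obtain n where n: "n \<in> G" "k = F - n" by blast
    then have "n \<le> F" "n \<notin> S" using GF G_def by auto
    then show "k \<in> {n. n \<le> F \<and> n \<in> S}" using sym[of n "F - n"] n by auto
  next
    fix k assume k: "k \<in> {n. n \<le> F \<and> n \<in> S}"
    then have nk: "F - k \<notin> S" using sym[of k "F - k"] by auto
    have "F - k > 0" using k notF by (metis mem_Collect_eq diff_is_0_eq le_antisym not_gr_zero)
    then have "F - k \<in> G" using nk G_def by auto
    moreover have "k = F - (F - k)" using k by auto
    ultimately show "k \<in> (\<lambda>n. F - n) ` G" by blast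
  qed
  have inj: "inj_on (\<lambda>n. F - n) G" using GF unfolding inj_on_def by (metis atLeastAtMost_iff diff_diff_cancel subsetD)
  have z: "0 \<in> S" using sym[of 0 F] notF by auto
  have un: "{0..F} = G \<union> {n. n \<le> F \<and> n \<in> S}"
  proof (rule set_eqI)
    fix x show "x \<in> {0..F} \<longleftrightarrow> x \<in> G \<union> {n. n \<le> F \<and> n \<in> S}"
      using above[of x] z by (cases "x = 0"; cases "x \<le> F") (auto simp: G_def)
  qed
  have dis: "G \<inter> {n. n \<le> F \<and> n \<in> S} = {}" unfolding G_def by auto
  have "card {0..F} = card G + card {n. n \<le> F \<and> n \<in> S}"
    unfolding un by (rule card_Un_disjoint[OF fin _ dis]) simp
  also have "card {n. n \<le> F \<and> n \<in> S} = card G" using card_image[OF inj] img by simp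
  finally show "2 * genus S = F + 1" unfolding genus_def G_def[symmetric] by simp
qed

lemma mcases:
  fixes a m :: nat
  assumes "odd m" "m > 4*a+2"
  obtains d where "m = 4*a+5+4*d" | d where "m = 4*a+3+4*d"
proof -
  have "\<exists>d. m = 4*a+5+4*d \<or> m = 4*a+3+4*d" using assms by presburger
  then show ?thesis using that by blast
qed

theorem corollary1:
  fixes \<alpha> m :: nat
  assumes "odd m" and "0 < m" and "m > 4 * \<alpha> + 2"
  defines "S \<equiv> gen_semigroup [4, 4 * \<alpha> + 2, m]"
  defines "\<beta>\<^sub>1 \<equiv> 8 * \<alpha> + 4"
  defines "\<beta>\<^sub>3 \<equiv> 2 * m"
  shows "real_of_int (frobenius S) = (real \<beta>\<^sub>1 + real \<beta>\<^sub>3) / 2 - 4 \<and>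
         real (genus S) = (real \<beta>\<^sub>1 + real \<beta>\<^sub>3) / 4 - 3 / 2"
proof -
  have mem: "n \<in> S \<longleftrightarrow> PP \<alpha> m n" for n unfolding S_def using charS assms by blast
  obtain F where F: "4*\<alpha> + 2 + m = F + 4" and fro: "frobenius S = int F" and gen: "2 * genus S = F + 1"
  proof (cases rule: mcases[OF assms(1,3)])
    case (1 d)
    have a: "frobenius S = int (8*\<alpha>+4*d+3)" "2 * genus S = (8*\<alpha>+4*d+3) + 1"
    proof -
      have A: "n \<in> S" if "n > 8*\<alpha>+4*d+3" for n using above1[OF that] mem[of n] 1 by simp
      have B: "8*\<alpha>+4*d+3 \<notin> S" using notF1 mem[of "8*\<alpha>+4*d+3"] 1 by simp
      have C: "n \<in> S \<longleftrightarrow> n' \<notin> S" if "n + n' = 8*\<alpha>+4*d+3" for n n'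
        using sym1[OF that] mem[of n] mem[of n'] 1 by simp
      show "frobenius S = int (8*\<alpha>+4*d+3)" "2 * genus S = (8*\<alpha>+4*d+3) + 1"
        using abstract[OF A B C] by blast+
    qed
    show ?thesis using that[OF _ a] 1 by simp
  next
    case (2 d)
    have a: "frobenius S = int (8*\<alpha>+4*d+1)" "2 * genus S = (8*\<alpha>+4*d+1) + 1"
    proof -
      have A: "n \<in> S" if "n > 8*\<alpha>+4*d+1" for n using above3[OF that] mem[of n] 2 by simp
      have B: "8*\<alpha>+4*d+1 \<notin> S" using notF3 mem[of "8*\<alpha>+4*d+1"] 2 by simp
      have C: "n \<in> S \<longleftrightarrow> n' \<notin> S" if "n + n' = 8*\<alpha>+4*d+1" for n n'
        using sym3[OF that] mem[of n] mem[of n'] 2 by simp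
      show "frobenius S = int (8*\<alpha>+4*d+1)" "2 * genus S = (8*\<alpha>+4*d+1) + 1"
        using abstract[OF A B C] by blast+
    qed
    show ?thesis using that[OF _ a] 2 by simp
  qed
  have Fr: "real F = 4*real \<alpha> + real m - 2"
  proof -
    have "real (4*\<alpha> + 2 + m) = real (F + 4)" using F by (rule arg_cong)
    then show ?thesis by simp
  qed
  have g: "real (genus S) = (real F + 1) / 2"
  proof -
    have "real (2 * genus S) = real (F + 1)" using gen by (rule arg_cong)
    then show ?thesis by simp
  qed
  have f: "real_of_int (frobenius S) = real F" using fro by simp
  show ?thesis unfolding \<beta>\<^sub>1_def \<beta>\<^sub>3_def f g Fr by (simp add: field_simps)
qed

thm_deps corollary1

end
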